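(* Let $X$ be a real locally uniformly convex Banach space and let $\varphi$ be a gauge function. Then for every $R>0$ and every $x_0\in X$ there exists a nondecreasing function $\psi=\psi(R,x_0):[0,\infty)\to[0,\infty)$ such that $\psi(0)=0$, $\psi(r)>0$ for all $r>0$, and $$\langle x^*-x_0^*,\,x-x_0\rangle\ \ge\ \psi(\|x-x_0\|)\,\|x-x_0\|$$ for all $x\in X$ with $\|x-x_0\|\le R$, all $x^*\in J_\varphi x$ and all $x_0^*\in J_\varphi x_0$.
   Context: A real Banach space $X$ is locally uniformly convex if for every $x_0\in X$ with $\|x_0\|=1$ and every $\varepsilon\in(0,2]$ there is $\delta=\delta(\varepsilon,x_0)>0$ such that for all $x\in X$ with $\|x\|=1$ and $\|x-x_0\|\ge\varepsilon$ one has $\|x+x_0\|\le 2(1-\delta)$. A gauge function is a strictly increasing continuous function $\varphi:[0,\infty)\to[0,\infty)$ with $\varphi(0)=0$ and $\varphi(r)\to\infty$ as $r\to\infty$. The duality mapping corresponding to $\varphi$ is the (possibly multivalued) map $J_\varphi:X\to 2^{X^*}$, $J_\varphi x=\{x^*\in X^*:\langle x^*,x\rangle=\varphi(\|x\|)\|x\|,\ \|x^*\|=\varphi(\|x\|)\}$. *)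

theory Defs
  imports "HOL-Analysis.Analysis"
begin

text \<open>The dual space X* of a real Banach space X is modelled by bounded linear
functionals 'a =>L real (blinfun), with the operator norm; the pairing is function application.\<close>

definition locally_uniformly_convex :: "'a::banach itself \<Rightarrow> bool" where
  "locally_uniformly_convex TYPE('a) \<longleftrightarrow>
     (\<forall>x0::'a. norm x0 = 1 \<longrightarrow>
        (\<forall>\<epsilon>. 0 < \<epsilon> \<and> \<epsilon> \<le> 2 \<longrightarrow>
           (\<exists>\<delta>>0. \<forall>x::'a. norm x = 1 \<and> norm (x - x0) \<ge> \<epsilon> \<longrightarrow>
                 norm (x + x0) \<le> 2 * (1 - \<delta>))))"

definition gauge_function :: "(real \<Rightarrow> real) \<Rightarrow> bool" where
  "gauge_function \<phi> \<longleftrightarrow>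
     strict_mono_on {0..} \<phi> \<and> continuous_on {0..} \<phi> \<and>
     (\<forall>r\<ge>0. \<phi> r \<ge> 0) \<and> \<phi> 0 = 0 \<and> filterlim \<phi> at_top at_top"

definition duality_map :: "(real \<Rightarrow> real) \<Rightarrow> 'a::real_normed_vector \<Rightarrow> ('a \<Rightarrow>\<^sub>L real) set" where
  "duality_map \<phi> x = {xs. blinfun_apply xs x = \<phi> (norm x) * norm x \<and> norm xs = \<phi> (norm x)}"

end

theory Submission
  imports Defs
begin

lemma gauge_less:
  assumes "gauge_function \<phi>" "0 \<le> x" "x < y" shows "\<phi> x < \<phi> y"
  using assms unfolding gauge_function_def strict_mono_on_def by auto

lemma gauge_le:
  assumes "gauge_function \<phi>" "0 \<le> x" "x \<le> y" shows "\<phi> x \<le> \<phi> y"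
proof (cases "x = y")
  case False then show ?thesis using less_imp_le[OF gauge_less[OF assms(1,2)]] assms(3) by simp
qed simp

lemma gauge_nonneg:
  assumes "gauge_function \<phi>" "0 \<le> x" shows "0 \<le> \<phi> x"
  using assms unfolding gauge_function_def by auto

lemma gauge_pos:
  assumes "gauge_function \<phi>" "0 < x" shows "0 < \<phi> x"
  using gauge_less[OF assms(1), of 0 x] assms unfolding gauge_function_def by auto

lemma dual_eq:
  assumes "xs \<in> duality_map \<phi> x" shows "blinfun_apply xs x = \<phi> (norm x) * norm x"
  using assms unfolding duality_map_def by auto

lemma dual_bound:
  assumes "xs \<in> duality_map \<phi> x" shows "blinfun_apply xs y \<le> \<phi> (norm x) * norm y"
proof -
  have "blinfun_apply xs y \<le> norm (blinfun_apply xs y)" by simp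
  also have "\<dots> \<le> norm xs * norm y" by (rule norm_blinfun)
  also have "norm xs = \<phi> (norm x)" using assms unfolding duality_map_def by auto
  finally show ?thesis .
qed

lemma value_expand:
  "blinfun_apply (xs - x0s) (x - x0) =
     blinfun_apply xs x + blinfun_apply x0s x0 - blinfun_apply xs x0 - blinfun_apply x0s x"
  by (simp add: blinfun.diff_left blinfun.diff_right)

lemma value_lower:
  assumes "xs \<in> duality_map \<phi> x" "x0s \<in> duality_map \<phi> x0"
  shows "(\<phi> (norm x) - \<phi> (norm x0)) * (norm x - norm x0) \<le> blinfun_apply (xs - x0s) (x - x0)"
proof -
  have "(\<phi> (norm x) - \<phi> (norm x0)) * (norm x - norm x0) =
     \<phi> (norm x) * norm x + \<phi> (norm x0) * norm x0 - \<phi> (norm x) * norm x0 - \<phi> (norm x0) * norm x"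
    by (simp add: algebra_simps)
  then show ?thesis
    using dual_eq[OF assms(1)] dual_eq[OF assms(2)] dual_bound[OF assms(1), of x0]
      dual_bound[OF assms(2), of x] value_expand[of xs x0s x x0] by linarith
qed

lemma key:
  fixes x0 :: "'a::banach"
  assumes luc: "locally_uniformly_convex TYPE('a)" and g: "gauge_function \<phi>"
    and R: "R > 0" and r: "r > 0"
  shows "\<exists>c>0. \<forall>x. r \<le> norm (x - x0) \<and> norm (x - x0) \<le> R \<longrightarrow>
     (\<forall>xs\<in>duality_map \<phi> x. \<forall>x0s\<in>duality_map \<phi> x0. c * norm (x - x0) \<le> blinfun_apply (xs - x0s) (x - x0))"
proof -
  have "\<exists>c>0. \<forall>x. r \<le> norm (x - x0) \<and> norm (x - x0) \<le> R \<longrightarrow>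
     (\<forall>xs\<in>duality_map \<phi> x. \<forall>x0s\<in>duality_map \<phi> x0. c \<le> blinfun_apply (xs - x0s) (x - x0))"
  proof (cases "x0 = 0")
    case True
    show ?thesis
    proof (intro exI[of _ "\<phi> r * r"] conjI allI impI ballI)
      show "0 < \<phi> r * r" using gauge_pos[OF g r] r by simp
      fix x xs x0s assume x: "r \<le> norm (x - x0) \<and> norm (x - x0) \<le> R"
        and xs: "xs \<in> duality_map \<phi> x" and x0s: "x0s \<in> duality_map \<phi> x0"
      have "norm x0s = \<phi> 0" using x0s True unfolding duality_map_def by simp
      then have "x0s = 0" using g unfolding gauge_function_def by simp
      then have v: "blinfun_apply (xs - x0s) (x - x0) = \<phi> (norm x) * norm x"
        using value_expand[of xs x0s x x0] dual_eq[OF xs] True by simp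
      have "r \<le> norm x" using x True by simp
      then have "\<phi> r \<le> \<phi> (norm x)" using gauge_le[OF g] r by simp
      then have "\<phi> r * r \<le> \<phi> (norm x) * norm x"
        using \<open>r \<le> norm x\<close> r gauge_nonneg[OF g, of r] by (intro mult_mono) auto
      then show "\<phi> r * r \<le> blinfun_apply (xs - x0s) (x - x0)" using v by simp
    qed
  next
    case False
    define b where "b = norm x0"
    have b: "b > 0" using False b_def by simp
    define \<eta> where "\<eta> = min (r/2) (b/2)"
    have eta: "\<eta> > 0" "\<eta> \<le> r/2" "\<eta> \<le> b/2" using b r by (auto simp: \<eta>_def)
    define m where "m = min (\<phi> (b+\<eta>) - \<phi> b) (\<phi> b - \<phi> (b-\<eta>))"
    have m: "m > 0" unfolding m_def using gauge_less[OF g, of b "b+\<eta>"] gauge_less[OF g, of "b-\<eta>" b] b eta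
      by auto
    define \<epsilon> where "\<epsilon> = min 2 (r/(4*b))"
    have eps: "0 < \<epsilon>" "\<epsilon> \<le> 2" using r b by (auto simp: \<epsilon>_def)
    define u0 where "u0 = (1/b) *\<^sub>R x0"
    have nu0: "norm u0 = 1" using b b_def by (simp add: u0_def)
    have x0u0: "x0 = b *\<^sub>R u0" using b by (simp add: u0_def)
    obtain \<delta> where d: "\<delta> > 0" and dprop: "\<And>x::'a. norm x = 1 \<Longrightarrow> norm (x - u0) \<ge> \<epsilon> \<Longrightarrow> norm (x + u0) \<le> 2 * (1 - \<delta>)"
      using luc nu0 eps unfolding locally_uniformly_convex_def by blast
    have phib: "\<phi> b > 0" using gauge_pos[OF g b] .
    show ?thesis
    proof (intro exI[of _ "min (m * \<eta>) (\<delta> * b * \<phi> b)"] conjI allI impI ballI)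
      show "0 < min (m * \<eta>) (\<delta> * b * \<phi> b)" using m eta d b phib by simp
      fix x xs x0s assume x: "r \<le> norm (x - x0) \<and> norm (x - x0) \<le> R"
        and xs: "xs \<in> duality_map \<phi> x" and x0s: "x0s \<in> duality_map \<phi> x0"
      define a where "a = norm x"
      have a0: "a \<ge> 0" by (simp add: a_def)
      have low: "(\<phi> a - \<phi> b) * (a - b) \<le> blinfun_apply (xs - x0s) (x - x0)"
        using value_lower[OF xs x0s] by (simp add: a_def b_def)
      have lownn: "0 \<le> (\<phi> a - \<phi> b) * (a - b)"
      proof (cases "a \<le> b")
        case True then have "\<phi> a \<le> \<phi> b" using gauge_le[OF g a0] by simp
        then show ?thesis using True by (simp add: mult_nonpos_nonpos)
      next
        case False then have "\<phi> b \<le> \<phi> a" using gauge_le[OF g, of b a] b by simp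
        then show ?thesis using False by simp
      qed
      show "min (m * \<eta>) (\<delta> * b * \<phi> b) \<le> blinfun_apply (xs - x0s) (x - x0)"
      proof (cases "b + \<eta> \<le> a")
        case True
        have "m \<le> \<phi> a - \<phi> b" using gauge_le[OF g, of "b+\<eta>" a] True b eta by (simp add: m_def)
        then have "m * \<eta> \<le> (\<phi> a - \<phi> b) * (a - b)" using True m eta by (intro mult_mono) auto
        then show ?thesis using low by linarith
      next
        case c1: False
        show ?thesis
        proof (cases "a \<le> b - \<eta>")
          case True
          have "m \<le> \<phi> b - \<phi> a" using gauge_le[OF g a0, of "b-\<eta>"] True by (simp add: m_def)
          then have "m * \<eta> \<le> (\<phi> b - \<phi> a) * (b - a)" using True m eta by (intro mult_mono) auto
          also have "\<dots> = (\<phi> a - \<phi> b) * (a - b)" by (simp add: algebra_simps)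
          finally show ?thesis using low by linarith
        next
          case False
          have ab: "\<bar>a - b\<bar> < \<eta>" using False c1 by auto
          have apos: "a > b/2" "a < 3*b/2" using ab eta by auto
          define u where "u = (1/a) *\<^sub>R x"
          have nu: "norm u = 1" using apos b by (simp add: u_def a_def[symmetric])
          have xu: "x = a *\<^sub>R u" using apos b by (simp add: u_def)
          have dec: "x - x0 = a *\<^sub>R (u - u0) + (a - b) *\<^sub>R u0"
            using xu x0u0 by (simp add: algebra_simps)
          have "norm (x - x0) \<le> norm (a *\<^sub>R (u - u0)) + norm ((a - b) *\<^sub>R u0)"
            unfolding dec by (rule norm_triangle_ineq)
          also have "\<dots> = a * norm (u - u0) + \<bar>a - b\<bar>" using a0 nu0 by simp
          finally have "r \<le> a * norm (u - u0) + \<bar>a - b\<bar>" using x by linarith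
          then have ar: "a * norm (u - u0) > r/2" using ab eta by linarith
          have uu: "norm (u - u0) \<ge> \<epsilon>"
          proof (rule ccontr)
            assume "\<not> ?thesis"
            then have "norm (u - u0) < r/(4*b)" by (simp add: \<epsilon>_def)
            then have "a * norm (u - u0) \<le> (3*b/2) * (r/(4*b))"
              using apos by (intro mult_mono) auto
            also have "\<dots> = 3*r/8" using b by (simp add: field_simps)
            finally show False using ar r by linarith
          qed
          have up: "norm (u + u0) \<le> 2 * (1 - \<delta>)" using dprop[OF nu uu] .
          have pa: "\<phi> a \<ge> 0" using gauge_nonneg[OF g a0] .
          have xsu: "blinfun_apply xs u = \<phi> a"
          proof -
            have "blinfun_apply xs (a *\<^sub>R u) = a * blinfun_apply xs u" by (simp add: blinfun.scaleR_right)
            moreover have "blinfun_apply xs x = \<phi> a * a" using dual_eq[OF xs] by (simp add: a_def)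
            ultimately have "a * blinfun_apply xs u = \<phi> a * a"
              using xu by simp
            then show ?thesis using apos b by (simp add: mult.commute)
          qed
          have x0su0: "blinfun_apply x0s u0 = \<phi> b"
          proof -
            have "blinfun_apply x0s (b *\<^sub>R u0) = b * blinfun_apply x0s u0" by (simp add: blinfun.scaleR_right)
            moreover have "blinfun_apply x0s x0 = \<phi> b * b" using dual_eq[OF x0s] by (simp add: b_def)
            ultimately have "b * blinfun_apply x0s u0 = \<phi> b * b"
              using x0u0 by simp
            then show ?thesis using b by (simp add: mult.commute)
          qed
          have "blinfun_apply xs (u + u0) \<le> \<phi> a * (2 * (1 - \<delta>))"
            using dual_bound[OF xs, of "u+u0"] up pa by (simp add: a_def[symmetric])
              (meson mult_left_mono order_trans)
          then have xsu0: "blinfun_apply xs u0 \<le> \<phi> a * (1 - 2*\<delta>)"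
            using xsu by (simp add: blinfun.add_right algebra_simps)
          have "blinfun_apply x0s (u + u0) \<le> \<phi> b * (2 * (1 - \<delta>))"
            using dual_bound[OF x0s, of "u+u0"] up phib by (simp add: b_def[symmetric])
              (meson less_imp_le mult_left_mono order_trans)
          then have x0su: "blinfun_apply x0s u \<le> \<phi> b * (1 - 2*\<delta>)"
            using x0su0 by (simp add: blinfun.add_right algebra_simps)
          have e1: "blinfun_apply xs x0 = b * blinfun_apply xs u0"
            using blinfun.scaleR_right[of xs b u0] x0u0 by simp
          have e2: "blinfun_apply x0s x = a * blinfun_apply x0s u"
            using blinfun.scaleR_right[of x0s a u] xu by simp
          have i1: "blinfun_apply xs x0 \<le> b * (\<phi> a * (1 - 2*\<delta>))"
            unfolding e1 using xsu0 b by (intro mult_left_mono) auto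
          have i2: "blinfun_apply x0s x \<le> a * (\<phi> b * (1 - 2*\<delta>))"
            unfolding e2 using x0su a0 by (intro mult_left_mono) auto
          have v: "blinfun_apply (xs - x0s) (x - x0) = \<phi> a * a + \<phi> b * b - blinfun_apply xs x0 - blinfun_apply x0s x"
            using value_expand[of xs x0s x x0] dual_eq[OF xs] dual_eq[OF x0s] by (simp add: a_def b_def)
          have E: "\<phi> a * a + \<phi> b * b - b * (\<phi> a * (1 - 2*\<delta>)) - a * (\<phi> b * (1 - 2*\<delta>))
              = (\<phi> a - \<phi> b) * (a - b) + 2*\<delta>*b*\<phi> a + 2*\<delta>*a*\<phi> b"
            by (simp add: algebra_simps)
          have t1: "0 \<le> 2*\<delta>*b*\<phi> a" using d b pa by simp
          have "\<delta>*b*\<phi> b \<le> \<delta>*(2*a)*\<phi> b" using d phib apos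
            by (intro mult_right_mono mult_left_mono) auto
          then have t2: "\<delta>*b*\<phi> b \<le> 2*\<delta>*a*\<phi> b" by (simp add: algebra_simps)
          have "\<delta>*b*\<phi> b \<le> blinfun_apply (xs - x0s) (x - x0)"
            using v E t1 t2 i1 i2 lownn by linarith
          then show ?thesis by linarith
        qed
      qed
    qed
  qed
  then obtain c where c: "c > 0" and cp: "\<forall>x. r \<le> norm (x - x0) \<and> norm (x - x0) \<le> R \<longrightarrow>
     (\<forall>xs\<in>duality_map \<phi> x. \<forall>x0s\<in>duality_map \<phi> x0. c \<le> blinfun_apply (xs - x0s) (x - x0))"
    by blast
  show ?thesis
  proof (intro exI[of _ "c / R"] conjI allI impI ballI)
    show "0 < c / R" using c R by simp
    fix x xs x0s assume x: "r \<le> norm (x - x0) \<and> norm (x - x0) \<le> R"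
      and xs: "xs \<in> duality_map \<phi> x" and x0s: "x0s \<in> duality_map \<phi> x0"
    have "c / R * norm (x - x0) \<le> c / R * R" using x c R by (intro mult_left_mono) auto
    also have "\<dots> = c" using R by simp
    finally show "c / R * norm (x - x0) \<le> blinfun_apply (xs - x0s) (x - x0)"
      using cp x xs x0s by fastforce
  qed
qed

theorem theorem2:
  fixes \<phi> :: "real \<Rightarrow> real"
  assumes "locally_uniformly_convex TYPE('a::banach)"
    and "gauge_function \<phi>"
  shows "\<forall>R>0. \<forall>x0::'a. \<exists>\<psi>::real \<Rightarrow> real.
           mono_on {0..} \<psi> \<and> (\<forall>r\<ge>0. \<psi> r \<ge> 0) \<and> \<psi> 0 = 0 \<and> (\<forall>r>0. \<psi> r > 0) \<and>
           (\<forall>x::'a. norm (x - x0) \<le> R \<longrightarrow>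
              (\<forall>xs\<in>duality_map \<phi> x. \<forall>x0s\<in>duality_map \<phi> x0.
                 blinfun_apply (xs - x0s) (x - x0) \<ge> \<psi> (norm (x - x0)) * norm (x - x0)))"
proof (intro allI impI)
  fix R :: real and x0 :: 'a
  assume R: "R > 0"
  define S where "S r = {blinfun_apply (xs - x0s) (x - x0) / norm (x - x0) | x xs x0s.
     min r R \<le> norm (x - x0) \<and> norm (x - x0) \<le> R \<and> xs \<in> duality_map \<phi> x \<and> x0s \<in> duality_map \<phi> x0}" for r
  define \<psi> where "\<psi> r = (if r \<le> 0 then 0 else Inf (insert 1 (S r)))" for r
  have bd: "\<exists>c>0. \<forall>y\<in>insert 1 (S r). c \<le> y" if r: "r > 0" for r
  proof -
    have "min r R > 0" using r R by simp
    from key[OF assms R this, of x0] obtain c where c: "c > 0" and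
      cp: "\<forall>x. min r R \<le> norm (x - x0) \<and> norm (x - x0) \<le> R \<longrightarrow>
     (\<forall>xs\<in>duality_map \<phi> x. \<forall>x0s\<in>duality_map \<phi> x0. c * norm (x - x0) \<le> blinfun_apply (xs - x0s) (x - x0))"
      by blast
    show ?thesis
    proof (intro exI[of _ "min c 1"] conjI ballI)
      show "0 < min c 1" using c by simp
      fix y assume "y \<in> insert 1 (S r)"
      then show "min c 1 \<le> y"
      proof
        assume "y \<in> S r"
        then obtain x xs x0s where y: "y = blinfun_apply (xs - x0s) (x - x0) / norm (x - x0)"
          and h: "min r R \<le> norm (x - x0)" "norm (x - x0) \<le> R" "xs \<in> duality_map \<phi> x" "x0s \<in> duality_map \<phi> x0"
          unfolding S_def by blast
        have np: "norm (x - x0) > 0" using h(1) \<open>min r R > 0\<close> by linarith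
        have "c * norm (x - x0) \<le> blinfun_apply (xs - x0s) (x - x0)" using cp h by blast
        then have "c \<le> y" unfolding y using np by (simp add: pos_le_divide_eq)
        then show ?thesis by linarith
      qed simp
    qed
  qed
  have bdd: "bdd_below (insert 1 (S r))" if "r > 0" for r
    using bd[OF that] unfolding bdd_below_def by blast
  have pos: "\<psi> r > 0" if r: "r > 0" for r
  proof -
    obtain c where c: "c > 0" "\<forall>y\<in>insert 1 (S r). c \<le> y" using bd[OF r] by blast
    have "c \<le> Inf (insert 1 (S r))" using c by (intro cInf_greatest) auto
    then show ?thesis using c r by (simp add: \<psi>_def)
  qed
  have nn: "\<psi> r \<ge> 0" if "r \<ge> 0" for r
    using pos[of r] that by (cases "r = 0") (auto simp: \<psi>_def)
  show "\<exists>\<psi>::real \<Rightarrow> real.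
           mono_on {0..} \<psi> \<and> (\<forall>r\<ge>0. \<psi> r \<ge> 0) \<and> \<psi> 0 = 0 \<and> (\<forall>r>0. \<psi> r > 0) \<and>
           (\<forall>x::'a. norm (x - x0) \<le> R \<longrightarrow>
              (\<forall>xs\<in>duality_map \<phi> x. \<forall>x0s\<in>duality_map \<phi> x0.
                 blinfun_apply (xs - x0s) (x - x0) \<ge> \<psi> (norm (x - x0)) * norm (x - x0)))"
  proof (intro exI[of _ \<psi>] conjI allI impI ballI)
    show "mono_on {0..} \<psi>"
    proof (rule mono_onI)
      fix r s :: real assume "r \<in> {0..}" "s \<in> {0..}" "r \<le> s"
      show "\<psi> r \<le> \<psi> s"
      proof (cases "r = 0")
        case True then show ?thesis using nn[of s] \<open>s \<in> {0..}\<close> by (simp add: \<psi>_def)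
      next
        case False
        then have rp: "r > 0" using \<open>r \<in> {0..}\<close> by simp
        have mm: "min r R \<le> min s R" using \<open>r \<le> s\<close> by linarith
        have "S s \<subseteq> S r" unfolding S_def using mm by (blast intro: order_trans)
        then have "Inf (insert 1 (S r)) \<le> Inf (insert 1 (S s))"
          by (intro cInf_superset_mono bdd[OF rp]) auto
        then show ?thesis using rp \<open>r \<le> s\<close> by (simp add: \<psi>_def)
      qed
    qed
    show "\<And>r. 0 \<le> r \<Longrightarrow> 0 \<le> \<psi> r" using nn by simp
    show "\<psi> 0 = 0" by (simp add: \<psi>_def)
    show "\<And>r. 0 < r \<Longrightarrow> 0 < \<psi> r" using pos by simp
    fix x xs x0s assume x: "norm (x - x0) \<le> R" and xs: "xs \<in> duality_map \<phi> x"
      and x0s: "x0s \<in> duality_map \<phi> x0"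
    show "\<psi> (norm (x - x0)) * norm (x - x0) \<le> blinfun_apply (xs - x0s) (x - x0)"
    proof (cases "x = x0")
      case True then show ?thesis by (simp add: \<psi>_def)
    next
      case False
      define t where "t = norm (x - x0)"
      have tp: "t > 0" using False by (simp add: t_def)
      have mt: "min t R = t" using x by (simp add: t_def)
      have "blinfun_apply (xs - x0s) (x - x0) / t \<in> S t"
        unfolding S_def mt using x xs x0s by (auto simp: t_def)
      then have "Inf (insert 1 (S t)) \<le> blinfun_apply (xs - x0s) (x - x0) / t"
        by (intro cInf_lower bdd[OF tp]) auto
      then have "\<psi> t \<le> blinfun_apply (xs - x0s) (x - x0) / t" using tp by (simp add: \<psi>_def)
      then have "\<psi> t * t \<le> blinfun_apply (xs - x0s) (x - x0)" using tp by (simp add: pos_le_divide_eq)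
      then show ?thesis by (simp add: t_def)
    qed
  qed
qed

end
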